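(* Let $q\in(0,1]$. Consider the parametric convex semi-infinite problem described in the context, let $((\bar c,\bar b),\bar x)\in\operatorname{gph}\mathcal{S}$, and assume that $\mathcal{L}$ is not $q$-order calm at $((f(\bar x)+\langle\bar c,\bar x\rangle,\bar b),\bar x)\in\operatorname{gph}\mathcal{L}$. Then there exist a sequence $(x^r)_{r\in\mathbb{N}}$ in $\mathbb{R}^n$ converging to $\bar x$ with $\bar f(x^r)>0$ and $\bar f(x^r)\downarrow0$, and a sequence $(v^r)_{r\in\mathbb{N}}$ with $v^r\in\partial\bar f(x^r)\setminus\{0_n\}$, such that $v^r\to0_n$ and $$d(x^r,\mathcal{S}(\bar c,\bar b))\ge\frac{\bar f(x^r)}{\|v^r\|}\quad\text{for all } r.$$
   Context: Setting: $T$ is a compact subset of a metric space $Z$ with $T\neq Z$; $f:\mathbb{R}^n\to\mathbb{R}$ and $g_t:\mathbb{R}^n\to\mathbb{R}$ ($t\in T$) are convex, with $(t,x)\mapsto g_t(x)$ continuous on $T\times\mathbb{R}^n$. $\mathcal{C}(T,\mathbb{R})$ is the space of continuous $b:T\to\mathbb{R}$, $t\mapsto b_t$, with $\|b\|_\infty=\max_t|b_t|$. For $(c,b)\in\mathbb{R}^n\times\mathcal{C}(T,\mathbb{R})$, $P(c,b)$: minimize $f(x)+\langle c,x\rangle$ subject to $g_t(x)\le b_t$, $t\in T$; $\mathcal{S}(c,b)$ is its optimal solution set. $\mathcal{L}(\alpha,b)=\{x: f(x)+\langle\bar c,x\rangle\le\alpha,\ g_t(x)\le b_t,\ t\in T\}$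 on $\mathbb{R}\times\mathcal{C}(T,\mathbb{R})$ normed by $\max\{|\alpha|,\|b\|_\infty\}$. $\bar f(x):=\sup\{f(x)-f(\bar x)+\langle\bar c,x-\bar x\rangle;\ g_t(x)-\bar b_t,\ t\in T\}$. $\partial$ is the convex subdifferential; $\|\cdot\|$ Euclidean. A set-valued $S:Y\rightrightarrows X$ between metric spaces is $q$-order calm at $(\bar y,\bar x)\in\operatorname{gph}S$ if there exist $\tau>0$ and neighbourhoods $U$ of $\bar x$, $V$ of $\bar y$ with $\tau\,d(x,S(\bar y))\le d(y,\bar y)^q$ for all $y\in V$, $x\in S(y)\cap U$. *)

theory Defs
  imports "HOL-Analysis.Analysis"
begin

definition supdist :: "'z set \<Rightarrow> ('z \<Rightarrow> real) \<Rightarrow> ('z \<Rightarrow> real) \<Rightarrow> real" where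
  "supdist T b b' = Sup (insert 0 ((\<lambda>t. \<bar>b t - b' t\<bar>) ` T))"

definition pdist :: "'z set \<Rightarrow> real \<times> ('z \<Rightarrow> real) \<Rightarrow> real \<times> ('z \<Rightarrow> real) \<Rightarrow> real" where
  "pdist T p p' = max \<bar>fst p - fst p'\<bar> (supdist T (snd p) (snd p'))"

definition param_space :: "'z::topological_space set \<Rightarrow> (real \<times> ('z \<Rightarrow> real)) set" where
  "param_space T = {p. continuous_on T (snd p)}"

definition q_order_calm ::
  "('y \<Rightarrow> 'y \<Rightarrow> real) \<Rightarrow> 'y set \<Rightarrow> ('y \<Rightarrow> 'x::metric_space set) \<Rightarrow> real \<Rightarrow> 'y \<Rightarrow> 'x \<Rightarrow> bool" where
  "q_order_calm d Y S q yb xb \<longleftrightarrow>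
     (\<exists>\<tau>>0. \<exists>\<epsilon>>0. \<forall>y\<in>Y. \<forall>x\<in>S y.
        d y yb < \<epsilon> \<longrightarrow> dist x xb < \<epsilon> \<longrightarrow> \<tau> * infdist x (S yb) \<le> (d y yb) powr q)"

definition feas :: "'z set \<Rightarrow> ('z \<Rightarrow> real^'n \<Rightarrow> real) \<Rightarrow> ('z \<Rightarrow> real) \<Rightarrow> (real^'n) set" where
  "feas T g b = {x. \<forall>t\<in>T. g t x \<le> b t}"

definition Sol :: "'z set \<Rightarrow> (real^'n \<Rightarrow> real) \<Rightarrow> ('z \<Rightarrow> real^'n \<Rightarrow> real)
    \<Rightarrow> real^'n \<Rightarrow> ('z \<Rightarrow> real) \<Rightarrow> (real^'n) set" where
  "Sol T f g c b = {x \<in> feas T g b. \<forall>y \<in> feas T g b. f x + c \<bullet> x \<le> f y + c \<bullet> y}"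

definition Lev :: "'z set \<Rightarrow> (real^'n \<Rightarrow> real) \<Rightarrow> ('z \<Rightarrow> real^'n \<Rightarrow> real)
    \<Rightarrow> real^'n \<Rightarrow> real \<times> ('z \<Rightarrow> real) \<Rightarrow> (real^'n) set" where
  "Lev T f g cb p = {x. f x + cb \<bullet> x \<le> fst p \<and> (\<forall>t\<in>T. g t x \<le> snd p t)}"

definition fbar :: "'z set \<Rightarrow> (real^'n \<Rightarrow> real) \<Rightarrow> ('z \<Rightarrow> real^'n \<Rightarrow> real)
    \<Rightarrow> real^'n \<Rightarrow> ('z \<Rightarrow> real) \<Rightarrow> real^'n \<Rightarrow> real^'n \<Rightarrow> real" where
  "fbar T f g cb bb xb x =
     Sup (insert (f x - f xb + cb \<bullet> (x - xb)) ((\<lambda>t. g t x - bb t) ` T))"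

definition subdiff :: "('a::real_inner \<Rightarrow> real) \<Rightarrow> 'a \<Rightarrow> 'a set" where
  "subdiff F x = {v. \<forall>y. F x + v \<bullet> (y - x) \<le> F y}"

end

theory Submission
  imports Defs
begin

lemma subgrad_small:
  fixes F :: "'a::euclidean_space \<Rightarrow> real"
  assumes cvx: "convex_on UNIV F" and e: "e \<ge> 0"
    and mn: "\<And>z. F y - e * norm (z - y) \<le> F z"
  shows "\<exists>v. (\<forall>z. F y + v \<bullet> (z - y) \<le> F z) \<and> norm v \<le> e"
proof -
  define A where "A = {p :: 'a \<times> real. F (y + fst p) - F y < snd p}"
  define B where "B = {p :: 'a \<times> real. snd p \<le> - e * norm (fst p)}"
  have cA: "convex A"
    unfolding convex_alt
  proof (intro ballI allI impI)
    fix p1 p2 :: "'a \<times> real" and u :: real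
    assume p1: "p1 \<in> A" and p2: "p2 \<in> A" and u: "0 \<le> u \<and> u \<le> 1"
    obtain u1 s1 u2 s2 where pp: "p1 = (u1, s1)" "p2 = (u2, s2)" by fastforce
    have h1: "F (y + u1) - F y < s1" and h2: "F (y + u2) - F y < s2"
      using p1 p2 pp by (auto simp: A_def)
    have "F ((1 - u) *\<^sub>R (y + u1) + u *\<^sub>R (y + u2)) \<le> (1 - u) * F (y + u1) + u * F (y + u2)"
      using convex_onD[OF cvx] u by auto
    moreover have "(1 - u) *\<^sub>R (y + u1) + u *\<^sub>R (y + u2) = y + ((1 - u) *\<^sub>R u1 + u *\<^sub>R u2)"
      by (simp add: algebra_simps)
    moreover have "(1 - u) * (F (y + u1) - F y) + u * (F (y + u2) - F y) < (1 - u) * s1 + u * s2"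
    proof (cases "u = 0")
      case True then show ?thesis using h1 by simp
    next
      case False
      then have "u > 0" using u by auto
      have "(1 - u) * (F (y + u1) - F y) \<le> (1 - u) * s1"
        using h1 u by (intro mult_left_mono) auto
      moreover have "u * (F (y + u2) - F y) < u * s2" using h2 \<open>u > 0\<close> by simp
      ultimately show ?thesis by linarith
    qed
    ultimately show "(1 - u) *\<^sub>R p1 + u *\<^sub>R p2 \<in> A"
      using pp by (auto simp: A_def algebra_simps)
  qed
  have cB: "convex B"
    unfolding convex_alt
  proof (intro ballI allI impI)
    fix p1 p2 :: "'a \<times> real" and u :: real
    assume p1: "p1 \<in> B" and p2: "p2 \<in> B" and u: "0 \<le> u \<and> u \<le> 1"
    obtain u1 s1 u2 s2 where pp: "p1 = (u1, s1)" "p2 = (u2, s2)" by fastforce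
    have h1: "s1 \<le> - e * norm u1" and h2: "s2 \<le> - e * norm u2"
      using p1 p2 pp by (auto simp: B_def)
    have "norm ((1 - u) *\<^sub>R u1 + u *\<^sub>R u2) \<le> (1 - u) * norm u1 + u * norm u2"
      using u by (metis (no_types, lifting) abs_of_nonneg diff_ge_0_iff_ge norm_scaleR norm_triangle_le order_refl add_mono)
    then have "e * norm ((1 - u) *\<^sub>R u1 + u *\<^sub>R u2) \<le> e * ((1 - u) * norm u1 + u * norm u2)"
      using e by (rule mult_left_mono)
    moreover have "(1 - u) * s1 \<le> (1 - u) * (- e * norm u1)" using h1 u by (intro mult_left_mono) auto
    moreover have "u * s2 \<le> u * (- e * norm u2)" using h2 u by (intro mult_left_mono) auto
    ultimately show "(1 - u) *\<^sub>R p1 + u *\<^sub>R p2 \<in> B"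
      using pp by (auto simp: B_def algebra_simps)
  qed
  have "(0, 1) \<in> A" unfolding A_def by simp
  then have neA: "A \<noteq> {}" by blast
  have "(0, 0) \<in> B" unfolding B_def by simp
  then have neB: "B \<noteq> {}" by blast
  have dis: "B \<inter> A = {}"
  proof (rule ccontr)
    assume "B \<inter> A \<noteq> {}"
    then obtain p where "p \<in> A" "p \<in> B" by auto
    then have "F (y + fst p) - F y < - e * norm (fst p)" by (auto simp: A_def B_def)
    moreover have "F y - e * norm ((y + fst p) - y) \<le> F (y + fst p)" by (rule mn)
    ultimately show False by simp
  qed
  obtain a c where a0: "a \<noteq> 0" and aB: "\<forall>p\<in>B. a \<bullet> p \<le> c" and aA: "\<forall>p\<in>A. a \<bullet> p \<ge> c"
    using separating_hyperplane_sets[OF cB cA neB neA dis] by blast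
  obtain w \<beta> where a: "a = (w, \<beta>)" by fastforce
  have B': "w \<bullet> u - \<beta> * e * norm u \<le> c" for u
  proof -
    have "(u, - e * norm u) \<in> B" by (simp add: B_def)
    then show ?thesis using aB a by force
  qed
  have A': "\<And>u s. F (y + u) - F y < s \<Longrightarrow> w \<bullet> u + \<beta> * s \<ge> c"
    using aA a by (auto simp: A_def)
  have c0: "0 \<le> c" using B'[of 0] by simp
  have bpos: "\<beta> > 0"
  proof (rule ccontr)
    assume "\<not> \<beta> > 0"
    show False
    proof (cases "\<beta> = 0")
      case True
      have "w \<bullet> w \<ge> c" using A'[of w "F (y + w) - F y + 1"] True by simp
      moreover have "w \<bullet> (- w) \<ge> c" using A'[of "-w" "F (y + - w) - F y + 1"] True by simp
      ultimately have "w \<bullet> w \<le> 0" using c0 by simp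
      then have "w = 0" by (metis inner_eq_zero_iff inner_ge_zero order_antisym)
      then show False using a0 a True by (simp add: zero_prod_def)
    next
      case False
      then have "\<beta> < 0" using \<open>\<not> \<beta> > 0\<close> by simp
      have "\<beta> * 1 \<ge> c" using A'[of 0 1] by simp
      then show False using c0 \<open>\<beta> < 0\<close> by simp
    qed
  qed
  have cle0: "c \<le> 0"
  proof (rule ccontr)
    assume "\<not> c \<le> 0"
    then have "\<beta> * (c / (2 * \<beta>)) \<ge> c" using A'[of 0 "c / (2 * \<beta>)"] bpos by simp
    then show False using bpos \<open>\<not> c \<le> 0\<close> by (simp add: field_simps)
  qed
  define v where "v = - (1 / \<beta>) *\<^sub>R w"
  have sub: "\<And>z. F y + v \<bullet> (z - y) \<le> F z"
  proof (rule ccontr)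
    fix z
    assume nz: "\<not> F y + v \<bullet> (z - y) \<le> F z"
    define s where "s = (F z - F y + v \<bullet> (z - y)) / 2"
    have "F (y + (z - y)) - F y < s" using nz by (simp add: s_def)
    then have "w \<bullet> (z - y) + \<beta> * s \<ge> c" by (rule A')
    then have "w \<bullet> (z - y) + \<beta> * s \<ge> 0" using c0 by simp
    then have "s \<ge> v \<bullet> (z - y)" using bpos
      by (simp add: v_def field_simps inner_commute)
    then show False using nz by (simp add: s_def)
  qed
  have "norm v \<le> e"
  proof (cases "v = 0")
    case True then show ?thesis using e by simp
  next
    case False
    have "w \<bullet> (- v) - \<beta> * e * norm (- v) \<le> 0" using B'[of "-v"] cle0 by simp
    moreover have "w = - \<beta> *\<^sub>R v" using bpos by (simp add: v_def)
    ultimately have "\<beta> * (v \<bullet> v) \<le> \<beta> * (e * norm v)" by (simp add: algebra_simps)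
    then have "v \<bullet> v \<le> e * norm v" using bpos by simp
    then have "norm v * norm v \<le> e * norm v" by (simp add: dot_square_norm power2_eq_square)
    then show ?thesis using False by simp
  qed
  then show ?thesis using sub by blast
qed


lemma infdist_ge_helper:
  assumes "A \<noteq> {}" "\<And>a. a \<in> A \<Longrightarrow> m \<le> dist x a"
  shows "m \<le> infdist x A"
  using assms by (simp add: infdist_notempty cINF_greatest)

theorem proposition4p4:
  fixes T :: "'z::metric_space set"
    and f :: "real^'n \<Rightarrow> real"
    and g :: "'z \<Rightarrow> real^'n \<Rightarrow> real"
    and q :: real
    and cb :: "real^'n" and bb :: "'z \<Rightarrow> real" and xb :: "real^'n"
  assumes T: "compact T" "T \<noteq> UNIV"
    and f_cvx: "convex_on UNIV f"
    and g_cvx: "\<And>t. t \<in> T \<Longrightarrow> convex_on UNIV (g t)"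
    and g_cont: "continuous_on (T \<times> UNIV) (\<lambda>(t, x). g t x)"
    and q: "0 < q" "q \<le> 1"
    and bb_cont: "continuous_on T bb"
    and xb_sol: "xb \<in> Sol T f g cb bb"
    and not_calm: "\<not> q_order_calm (pdist T) (param_space T) (Lev T f g cb) q
                        (f xb + cb \<bullet> xb, bb) xb"
  shows "\<exists>x v :: nat \<Rightarrow> real^'n.
           x \<longlonglongrightarrow> xb
         \<and> (\<forall>r. fbar T f g cb bb xb (x r) > 0)
         \<and> decseq (\<lambda>r. fbar T f g cb bb xb (x r))
         \<and> (\<lambda>r. fbar T f g cb bb xb (x r)) \<longlonglongrightarrow> 0
         \<and> (\<forall>r. v r \<in> subdiff (fbar T f g cb bb xb) (x r) \<and> v r \<noteq> 0)
         \<and> v \<longlonglongrightarrow> 0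
         \<and> (\<forall>r. infdist (x r) (Sol T f g cb bb) \<ge> fbar T f g cb bb xb (x r) / norm (v r))"
proof -
  define F where "F = fbar T f g cb bb xb"
  define S where "S = Sol T f g cb bb"
  have gc: "continuous_on T (\<lambda>t. g t z)" for z
  proof -
    have "continuous_on T (\<lambda>t. (t, z))" by (intro continuous_intros)
    moreover have "(\<lambda>t. (t, z)) ` T \<subseteq> T \<times> UNIV" by auto
    ultimately show ?thesis using continuous_on_compose2[OF g_cont, of T "\<lambda>t. (t, z)"] by simp
  qed
  have bdd: "bdd_above ((\<lambda>t. g t z - bb t) ` T)" for z
  proof -
    have "continuous_on T (\<lambda>t. g t z - bb t)" using gc bb_cont by (intro continuous_intros)
    then have "compact ((\<lambda>t. g t z - bb t) ` T)" using T(1) by (rule compact_continuous_image)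
    then show ?thesis by (intro bounded_imp_bdd_above compact_imp_bounded)
  qed
  have Fge1: "f z - f xb + cb \<bullet> (z - xb) \<le> F z" for z
    unfolding F_def fbar_def using bdd[of z] by (intro cSup_upper) auto
  have Fge2: "g t z - bb t \<le> F z" if "t \<in> T" for z t
    unfolding F_def fbar_def using bdd[of z] that by (intro cSup_upper) auto
  have Fle: "F z \<le> c" if "f z - f xb + cb \<bullet> (z - xb) \<le> c" "\<forall>t\<in>T. g t z - bb t \<le> c" for z c
    unfolding F_def fbar_def using that by (intro cSup_least) auto
  have xbf: "\<forall>t\<in>T. g t xb \<le> bb t" and xbopt: "\<And>w. (\<forall>t\<in>T. g t w \<le> bb t) \<Longrightarrow> f xb + cb \<bullet> xb \<le> f w + cb \<bullet> w"
    using xb_sol by (auto simp: Sol_def feas_def)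
  have Sol_iff: "z \<in> S \<longleftrightarrow> F z \<le> 0" for z
  proof
    assume "z \<in> S"
    then have "\<forall>t\<in>T. g t z \<le> bb t" "f z + cb \<bullet> z \<le> f xb + cb \<bullet> xb"
      using xbf by (auto simp: S_def Sol_def feas_def)
    then show "F z \<le> 0" by (intro Fle) (auto simp: inner_diff_right)
  next
    assume "F z \<le> 0"
    then have zf: "\<forall>t\<in>T. g t z \<le> bb t" and "f z + cb \<bullet> z \<le> f xb + cb \<bullet> xb"
      using Fge1[of z] Fge2[of _ z] by (auto simp: inner_diff_right, smt (verit))
    then have "\<forall>w. (\<forall>t\<in>T. g t w \<le> bb t) \<longrightarrow> f z + cb \<bullet> z \<le> f w + cb \<bullet> w"
      using xbopt by fastforce
    then show "z \<in> S" using zf by (auto simp: S_def Sol_def feas_def)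
  qed
  have Lev_iff: "z \<in> Lev T f g cb (f xb + cb \<bullet> xb, bb) \<longleftrightarrow> F z \<le> 0" for z
  proof
    assume "z \<in> Lev T f g cb (f xb + cb \<bullet> xb, bb)"
    then show "F z \<le> 0" by (intro Fle) (auto simp: Lev_def inner_diff_right)
  next
    assume "F z \<le> 0"
    then show "z \<in> Lev T f g cb (f xb + cb \<bullet> xb, bb)"
      using Fge1[of z] Fge2[of _ z] by (auto simp: Lev_def inner_diff_right, (smt (verit))+)
  qed
  have LevS: "Lev T f g cb (f xb + cb \<bullet> xb, bb) = S" using Lev_iff Sol_iff by blast
  have xbS: "xb \<in> S" using xb_sol by (simp add: S_def)
  have Fxb: "F xb \<le> 0" using xbS Sol_iff by blast
  have Fnn: "0 \<le> F z" for z
  proof (cases "\<forall>t\<in>T. g t z \<le> bb t")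
    case True
    then have "f xb + cb \<bullet> xb \<le> f z + cb \<bullet> z" by (rule xbopt)
    then show ?thesis using Fge1[of z] by (simp add: inner_diff_right)
  next
    case False
    then obtain t where "t \<in> T" "g t z > bb t" by auto
    then show ?thesis using Fge2[of t z] by simp
  qed
  have cvx: "convex_on UNIV F"
  proof (rule convex_onI)
    fix t :: real and x y :: "real^'n"
    assume t: "0 < t" "t < 1"
    show "F ((1 - t) *\<^sub>R x + t *\<^sub>R y) \<le> (1 - t) * F x + t * F y"
    proof (rule Fle)
      have "f ((1 - t) *\<^sub>R x + t *\<^sub>R y) \<le> (1 - t) * f x + t * f y"
        using convex_onD[OF f_cvx] t by auto
      moreover have "(1 - t) * (f x - f xb + cb \<bullet> (x - xb)) \<le> (1 - t) * F x"
        using Fge1[of x] t by (intro mult_left_mono) auto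
      moreover have "t * (f y - f xb + cb \<bullet> (y - xb)) \<le> t * F y"
        using Fge1[of y] t by (intro mult_left_mono) auto
      ultimately show "f ((1 - t) *\<^sub>R x + t *\<^sub>R y) - f xb + cb \<bullet> ((1 - t) *\<^sub>R x + t *\<^sub>R y - xb)
          \<le> (1 - t) * F x + t * F y"
        by (simp add: inner_diff_right inner_add_right algebra_simps)
      show "\<forall>s\<in>T. g s ((1 - t) *\<^sub>R x + t *\<^sub>R y) - bb s \<le> (1 - t) * F x + t * F y"
      proof
        fix s assume s: "s \<in> T"
        have "g s ((1 - t) *\<^sub>R x + t *\<^sub>R y) \<le> (1 - t) * g s x + t * g s y"
          using convex_onD[OF g_cvx[OF s]] t by auto
        moreover have "(1 - t) * (g s x - bb s) \<le> (1 - t) * F x"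
          using Fge2[OF s, of x] t by (intro mult_left_mono) auto
        moreover have "t * (g s y - bb s) \<le> t * F y"
          using Fge2[OF s, of y] t by (intro mult_left_mono) auto
        ultimately show "g s ((1 - t) *\<^sub>R x + t *\<^sub>R y) - bb s \<le> (1 - t) * F x + t * F y"
          by (simp add: algebra_simps)
      qed
    qed
  qed simp
  have Fcont: "continuous_on UNIV F" using convex_on_continuous[OF open_UNIV cvx] .
  have step: "\<exists>y v. 0 < F y \<and> F y \<le> inverse (real (Suc r)) \<and> dist y xb \<le> 2 * inverse (real (Suc r))
     \<and> v \<in> subdiff F y \<and> v \<noteq> 0 \<and> norm v \<le> 2 * inverse (real (Suc r)) \<and> F y / norm v \<le> infdist y S" for r
  proof -
    define e where "e = inverse (real (Suc r))"
    have e: "0 < e" "e \<le> 1" by (auto simp: e_def inverse_le_1_iff)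
    obtain p x where p: "p \<in> param_space T" and xL: "x \<in> Lev T f g cb p"
      and pd: "pdist T p (f xb + cb \<bullet> xb, bb) < e" and dx: "dist x xb < e"
      and nc: "\<not> e * infdist x S \<le> (pdist T p (f xb + cb \<bullet> xb, bb)) powr q"
    proof -
      have "\<not> (\<forall>y\<in>param_space T. \<forall>x\<in>Lev T f g cb y. pdist T y (f xb + cb \<bullet> xb, bb) < e \<longrightarrow>
          dist x xb < e \<longrightarrow> e * infdist x S \<le> (pdist T y (f xb + cb \<bullet> xb, bb)) powr q)"
        using not_calm e(1) unfolding q_order_calm_def LevS by blast
      then show ?thesis using that by blast
    qed
    define \<delta> where "\<delta> = pdist T p (f xb + cb \<bullet> xb, bb)"
    define D where "D = infdist x S"
    define a where "a = F x"
    have Fxd: "a \<le> \<delta>" unfolding a_def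
    proof (rule Fle)
      have "f x + cb \<bullet> x \<le> fst p" using xL by (simp add: Lev_def)
      then show "f x - f xb + cb \<bullet> (x - xb) \<le> \<delta>"
        unfolding \<delta>_def pdist_def by (simp add: inner_diff_right)
      show "\<forall>t\<in>T. g t x - bb t \<le> \<delta>"
      proof
        fix t assume t: "t \<in> T"
        have "continuous_on T (\<lambda>t. \<bar>snd p t - bb t\<bar>)"
          using p bb_cont by (auto simp: param_space_def intro!: continuous_intros)
        then have "compact ((\<lambda>t. \<bar>snd p t - bb t\<bar>) ` T)" using T(1) by (rule compact_continuous_image)
        then have "bdd_above (insert 0 ((\<lambda>t. \<bar>snd p t - bb t\<bar>) ` T))"
          by (intro bdd_above_insert[THEN iffD2] bounded_imp_bdd_above compact_imp_bounded)
        then have "\<bar>snd p t - bb t\<bar> \<le> supdist T (snd p) bb"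
          unfolding supdist_def using t by (intro cSup_upper) auto
        moreover have "g t x \<le> snd p t" using xL t by (simp add: Lev_def)
        ultimately show "g t x - bb t \<le> \<delta>" unfolding \<delta>_def pdist_def by simp
      qed
    qed
    have "0 \<le> \<delta> powr q" by simp
    then have "e * D > 0" using nc unfolding D_def \<delta>_def by linarith
    then have Dpos: "D > 0" using e(1) by (simp add: zero_less_mult_iff)
    have "x \<notin> S" using Dpos unfolding D_def by auto
    then have apos: "a > 0" using Sol_iff unfolding a_def by auto
    have dlt: "\<delta> < e" using pd by (simp add: \<delta>_def)
    have "\<delta> \<le> \<delta> powr q"
      using powr_mono'[of q 1 \<delta>] q apos Fxd dlt e by (simp add: powr_one)
    then have eD: "a < e * D" using nc Fxd unfolding D_def \<delta>_def by linarith
    have Dle: "D \<le> dist x xb" unfolding D_def using xbS by (rule infdist_le)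
    define eG where "eG = 2 * a / D"
    have eGpos: "eG > 0" using apos Dpos by (simp add: eG_def)
    have eGle: "eG < 2 * e" using eD Dpos by (simp add: eG_def field_simps)
    define G where "G z = F z + eG * dist z x" for z
    have Gc: "continuous_on (cball x D) G" unfolding G_def
      by (intro continuous_intros continuous_on_subset[OF Fcont]) auto
    obtain y where yin: "y \<in> cball x D" and ymin: "\<forall>z\<in>cball x D. G y \<le> G z"
      using continuous_attains_inf[OF compact_cball _ Gc] Dpos by fastforce
    have Gx: "G x = a" by (simp add: G_def a_def)
    have "x \<in> cball x D" using Dpos by simp
    then have Gya: "G y \<le> a" using ymin Gx by metis
    have eGD: "eG * D = 2 * a" using Dpos by (simp add: eG_def)
    have gmin: "G y \<le> G z" for z
    proof (cases "z \<in> cball x D")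
      case True then show ?thesis using ymin by blast
    next
      case False
      then have "dist z x > D" by (simp add: dist_commute)
      then have "eG * D < eG * dist z x" using eGpos by simp
      then show ?thesis using Gya eGD Fnn[of z] apos unfolding G_def by linarith
    qed
    have Fypos: "F y > 0"
    proof (rule ccontr)
      assume "\<not> F y > 0"
      then have "y \<in> S" using Sol_iff by auto
      then have "D \<le> dist x y" unfolding D_def by (rule infdist_le)
      then have "eG * D \<le> eG * dist y x" using eGpos by (simp add: dist_commute)
      then show False using Gya eGD Fnn[of y] apos unfolding G_def by linarith
    qed
    have Fya: "F y \<le> a" using Gya eGpos unfolding G_def by (smt (verit) zero_le_dist mult_nonneg_nonneg)
    have "eG * dist y x \<le> a" using Gya Fnn[of y] unfolding G_def by linarith
    then have "eG * dist y x \<le> eG * (D / 2)" using eGD by simp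
    then have dyx: "dist y x \<le> D / 2" using eGpos by simp
    have dyxb: "dist y xb \<le> 2 * e"
    proof -
      have h1: "dist y x \<le> dist x xb / 2" using dyx Dle by linarith
      have h2: "dist y x + dist x xb \<le> 2 * e" using h1 dx e(1) by linarith
      show ?thesis using dist_triangle[of y xb x] h2 by linarith
    qed
    have mn: "F y - eG * norm (z - y) \<le> F z" for z
    proof -
      have "G y \<le> G z" by (rule gmin)
      moreover have "dist z x \<le> dist z y + dist y x" by (rule dist_triangle)
      ultimately show ?thesis unfolding G_def dist_norm
        using eGpos by (smt (verit) mult_left_mono distrib_left)
    qed
    obtain v where vsub: "\<forall>z. F y + v \<bullet> (z - y) \<le> F z" and vn: "norm v \<le> eG"
      using subgrad_small[OF cvx less_imp_le[OF eGpos] mn] by blast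
    have v0: "v \<noteq> 0"
    proof
      assume "v = 0"
      then have "F y \<le> F xb" using vsub by auto
      then show False using Fxb Fypos by simp
    qed
    have "F y / norm v \<le> infdist y S"
    proof (rule infdist_ge_helper)
      show "S \<noteq> {}" using xbS by blast
      fix z assume "z \<in> S"
      then have "F z \<le> 0" using Sol_iff by blast
      then have "F y \<le> - (v \<bullet> (z - y))" using vsub by (smt (verit))
      also have "\<dots> = v \<bullet> (y - z)" by (simp add: inner_diff_right)
      also have "\<dots> \<le> norm v * norm (y - z)" by (rule norm_cauchy_schwarz)
      also have "\<dots> = norm v * norm (z - y)" by (simp add: norm_minus_commute)
      finally show "F y / norm v \<le> dist y z"
        using v0 by (simp add: divide_le_eq dist_norm norm_minus_commute mult.commute)
    qed
    then show ?thesis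
      using Fypos Fya apos Fxd dlt dyxb vsub v0 vn eGle unfolding e_def subdiff_def
      by (intro exI[of _ y] exI[of _ v]) auto
  qed
  define P where "P r y v \<longleftrightarrow> 0 < F y \<and> F y \<le> inverse (real (Suc r)) \<and> dist y xb \<le> 2 * inverse (real (Suc r))
     \<and> v \<in> subdiff F y \<and> v \<noteq> 0 \<and> norm v \<le> 2 * inverse (real (Suc r)) \<and> F y / norm v \<le> infdist y S" for r y v
  have "\<forall>r. \<exists>y. \<exists>v. P r y v" using step unfolding P_def by blast
  then have "\<exists>Y. \<forall>r. \<exists>v. P r (Y r) v" by (rule choice)
  then obtain Y where "\<forall>r. \<exists>v. P r (Y r) v" by blast
  then have "\<exists>V. \<forall>r. P r (Y r) (V r)" by (rule choice)
  then obtain V where PYV: "\<And>r. P r (Y r) (V r)" by blast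
  have inv0: "(\<lambda>r. 2 * inverse (real (Suc r))) \<longlonglongrightarrow> 0"
    using tendsto_mult[OF tendsto_const LIMSEQ_inverse_real_of_nat, of 2] by simp
  have FY0: "(\<lambda>r. F (Y r)) \<longlonglongrightarrow> 0"
  proof (rule tendsto_sandwich[OF _ _ tendsto_const LIMSEQ_inverse_real_of_nat])
    show "\<forall>\<^sub>F n in sequentially. 0 \<le> F (Y n)" by (rule always_eventually) (use PYV in \<open>auto simp: P_def intro: less_imp_le\<close>)
    show "\<forall>\<^sub>F n in sequentially. F (Y n) \<le> inverse (real (Suc n))" by (rule always_eventually) (use PYV in \<open>auto simp: P_def\<close>)
  qed
  have Y0: "Y \<longlonglongrightarrow> xb"
  proof (rule tendsto_dist_iff[THEN iffD2], rule tendsto_sandwich[OF _ _ tendsto_const inv0])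
    show "\<forall>\<^sub>F n in sequentially. 0 \<le> dist (Y n) xb" by (rule always_eventually) simp
    show "\<forall>\<^sub>F n in sequentially. dist (Y n) xb \<le> 2 * inverse (real (Suc n))" by (rule always_eventually) (use PYV in \<open>auto simp: P_def\<close>)
  qed
  have V0: "V \<longlonglongrightarrow> 0"
  proof (rule tendsto_norm_zero_iff[THEN iffD1], rule tendsto_sandwich[OF _ _ tendsto_const inv0])
    show "\<forall>\<^sub>F n in sequentially. 0 \<le> norm (V n)" by (rule always_eventually) simp
    show "\<forall>\<^sub>F n in sequentially. norm (V n) \<le> 2 * inverse (real (Suc n))" by (rule always_eventually) (use PYV in \<open>auto simp: P_def\<close>)
  qed
  obtain \<sigma> where sm: "strict_mono \<sigma>" and mono: "monoseq (\<lambda>n. F (Y (\<sigma> n)))"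
    using seq_monosub[of "\<lambda>n. F (Y n)"] by blast
  have FYs: "(\<lambda>n. F (Y (\<sigma> n))) \<longlonglongrightarrow> 0"
    using LIMSEQ_subseq_LIMSEQ[OF FY0 sm] by (simp add: o_def)
  have Ys: "(\<lambda>n. Y (\<sigma> n)) \<longlonglongrightarrow> xb"
    using LIMSEQ_subseq_LIMSEQ[OF Y0 sm] by (simp add: o_def)
  have Vs: "(\<lambda>n. V (\<sigma> n)) \<longlonglongrightarrow> 0"
    using LIMSEQ_subseq_LIMSEQ[OF V0 sm] by (simp add: o_def)
  have dec: "decseq (\<lambda>n. F (Y (\<sigma> n)))"
  proof -
    have "\<not> incseq (\<lambda>n. F (Y (\<sigma> n)))"
    proof
      assume inc: "incseq (\<lambda>n. F (Y (\<sigma> n)))"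
      have "F (Y (\<sigma> 0)) \<le> 0"
        by (rule LIMSEQ_le_const[OF FYs]) (intro exI[of _ 0] allI impI, rule incseqD[OF inc], simp)
      then show False using PYV[of "\<sigma> 0"] unfolding P_def by simp
    qed
    then show ?thesis using mono monoseq_iff by blast
  qed
  show ?thesis
    unfolding F_def[symmetric] S_def[symmetric]
  proof (intro exI conjI allI)
    show "(\<lambda>n. Y (\<sigma> n)) \<longlonglongrightarrow> xb" by (rule Ys)
    show "(\<lambda>n. F (Y (\<sigma> n))) \<longlonglongrightarrow> 0" by (rule FYs)
    show "(\<lambda>n. V (\<sigma> n)) \<longlonglongrightarrow> 0" by (rule Vs)
    show "decseq (\<lambda>n. F (Y (\<sigma> n)))" by (rule dec)
    fix r
    have p: "P (\<sigma> r) (Y (\<sigma> r)) (V (\<sigma> r))" by (rule PYV)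
    show "0 < F (Y (\<sigma> r))" using p unfolding P_def by blast
    show "V (\<sigma> r) \<in> subdiff F (Y (\<sigma> r))" using p unfolding P_def by blast
    show "V (\<sigma> r) \<noteq> 0" using p unfolding P_def by blast
    show "F (Y (\<sigma> r)) / norm (V (\<sigma> r)) \<le> infdist (Y (\<sigma> r)) S" using p unfolding P_def by blast
  qed
qed

end
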